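(* Let $n\ge 3$ and $\Delta,\Delta'\in\mathcal{P}_n$, and suppose there is $i\in\mathbb{Z}_n$ such that: $lab_\Delta((i+1,i))=lab_{\Delta'}((i+1,i))=\ominus$; $lab_\Delta((i-1,i))\neq lab_{\Delta'}((i-1,i))$; and $lab_\Delta((j_1,j_2))=lab_{\Delta'}((j_1,j_2))$ for every arc $(j_1,j_2)\neq(i-1,i)$ of the form $(j,j+1)$ or $(j+1,j)$, $j\in\mathbb{Z}_n$. Then $f^{(\Delta)}_{8,n}=f^{(\Delta')}_{8,n}$.
   Context: Cells are indexed by $\mathbb{Z}_n=\{0,\dots,n-1\}$, indices modulo $n$. Rule $8$ has local rule $r_8(x_1,x_2,x_3)=\neg x_1\wedge x_2\wedge x_3$ and global function $f_{8,n}(x)_i=r_8(x_{i-1},x_i,x_{i+1})$. An update schedule is an ordered partition $\Delta=(\Delta_1,\dots,\Delta_k)$ of $\mathbb{Z}_n$ into nonempty blocks; $\mathcal{P}_n$ is the set of them. For a block $B$ let $f^{(B)}(x)_i=f_{8,n}(x)_i$ if $i\in B$ and $x_i$ otherwise; $f^{(\Delta)}_{8,n}=f^{(\Delta_k)}\circ\cdots\circ f^{(\Delta_1)}$. (The paper states the conclusion as equality of the transition digraphs with arcs $(x,f^{(\Delta)}_{8,n}(x))$, equivalent to equality of the maps.) For $u,v\in\mathbb{Z}_n$ with $u\in\Delta_a$, $v\in\Delta_b$, $lab_\Delta((u,v))=\oplus$ if $b\le a$ and $\ominus$ if $a<b$. *)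

theory Defs
  imports Main
begin

text \<open>Cells are 0..n-1 (indices modulo n); a configuration is a function nat => bool
  (cells outside 0..n-1 are never touched by the dynamics).\<close>

definition r8 :: "bool \<Rightarrow> bool \<Rightarrow> bool \<Rightarrow> bool" where
  "r8 x1 x2 x3 = (\<not> x1 \<and> x2 \<and> x3)"

definition f8 :: "nat \<Rightarrow> (nat \<Rightarrow> bool) \<Rightarrow> nat \<Rightarrow> bool" where
  "f8 n x i = r8 (x ((i + n - 1) mod n)) (x i) (x ((i + 1) mod n))"

definition block_update :: "nat \<Rightarrow> nat set \<Rightarrow> (nat \<Rightarrow> bool) \<Rightarrow> (nat \<Rightarrow> bool)" where
  "block_update n B x = (\<lambda>i. if i \<in> B then f8 n x i else x i)"

text \<open>f^(Delta) = f^(Delta_k) o ... o f^(Delta_1): fold applies the first block first.\<close>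
definition sched_update :: "nat \<Rightarrow> nat set list \<Rightarrow> (nat \<Rightarrow> bool) \<Rightarrow> (nat \<Rightarrow> bool)" where
  "sched_update n D = fold (block_update n) D"

definition ordered_partition :: "nat \<Rightarrow> nat set list \<Rightarrow> bool" where
  "ordered_partition n D \<longleftrightarrow>
     (\<forall>B\<in>set D. B \<noteq> {}) \<and>
     (\<forall>a<length D. \<forall>b<length D. a \<noteq> b \<longrightarrow> D ! a \<inter> D ! b = {}) \<and>
     \<Union>(set D) = {..<n}"

definition blk :: "nat set list \<Rightarrow> nat \<Rightarrow> nat" where
  "blk D u = (THE a. a < length D \<and> u \<in> D ! a)"

datatype label = Plus | Minus

definition lab :: "nat set list \<Rightarrow> nat \<Rightarrow> nat \<Rightarrow> label" where
  "lab D u v = (if blk D v \<le> blk D u then Plus else Minus)"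

end

theory Submission
  imports Defs
begin

lemma blk_unique:
  assumes op: "ordered_partition n D" and a: "a < length D" and u: "u \<in> D ! a"
  shows "blk D u = a"
  unfolding blk_def
proof (rule the_equality)
  show "a < length D \<and> u \<in> D ! a" using a u by simp
  fix b assume "b < length D \<and> u \<in> D ! b"
  with op a u show "b = a" unfolding ordered_partition_def by blast
qed

lemma blk_props:
  assumes op: "ordered_partition n D" and u: "u < n"
  shows "blk D u < length D \<and> u \<in> D ! blk D u"
proof -
  have "u \<in> \<Union>(set D)" using op u unfolding ordered_partition_def by auto
  then obtain B where "B \<in> set D" "u \<in> B" by auto
  then obtain a where "a < length D" "D ! a = B" by (auto simp: in_set_conv_nth)
  then show ?thesis using blk_unique[OF op] \<open>u \<in> B\<close> by auto
qed

lemma S_Suc: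
  "k < length D \<Longrightarrow> fold (block_update n) (take (Suc k) D) x
     = block_update n (D ! k) (fold (block_update n) (take k D) x)"
  by (simp add: take_Suc_conv_app_nth)

lemma S_stable:
  assumes op: "ordered_partition n D" and u: "u < n"
  shows "k \<le> length D \<Longrightarrow> fold (block_update n) (take k D) x u =
    (if k \<le> blk D u then x u else fold (block_update n) (take (Suc (blk D u)) D) x u)"
proof (induction k)
  case 0
  then show ?case by simp
next
  case (Suc k)
  then have k: "k < length D" by simp
  have bp: "blk D u < length D" "u \<in> D ! blk D u" using blk_props[OF op u] by auto
  show ?case
  proof (cases "k = blk D u")
    case True
    then show ?thesis by simp
  next
    case False
    then have "u \<notin> D ! k" using blk_unique[OF op k] by blast
    then have "fold (block_update n) (take (Suc k) D) x u = fold (block_update n) (take k D) x u"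
      using S_Suc[OF k] by (simp add: block_update_def)
    with Suc k False show ?thesis by auto
  qed
qed

lemma char:
  assumes op: "ordered_partition n D" and v: "v < n"
  shows "sched_update n D x v = r8
     (if blk D ((v+n-1) mod n) < blk D v then sched_update n D x ((v+n-1) mod n) else x ((v+n-1) mod n))
     (x v)
     (if blk D ((v+1) mod n) < blk D v then sched_update n D x ((v+1) mod n) else x ((v+1) mod n))"
proof -
  let ?S = "\<lambda>k. fold (block_update n) (take k D) x"
  have fin: "sched_update n D x = ?S (length D)" by (simp add: sched_update_def)
  have bp: "blk D v < length D" "v \<in> D ! blk D v" using blk_props[OF op v] by auto
  have gen: "?S (blk D v) u = (if blk D u < blk D v then sched_update n D x u else x u)"
    if "u < n" for u
  proof -
    have b: "blk D u < length D" using blk_props[OF op that] by auto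
    have "?S (length D) u = ?S (Suc (blk D u)) u"
      using S_stable[OF op that, of "length D" x] b by auto
    then show ?thesis using S_stable[OF op that, of "blk D v" x] bp fin by auto
  qed
  have "sched_update n D x v = ?S (Suc (blk D v)) v"
    using S_stable[OF op v, of "length D" x] bp fin by auto
  also have "\<dots> = f8 n (?S (blk D v)) v"
    using S_Suc[OF bp(1)] bp(2) by (simp add: block_update_def)
  also have "\<dots> = r8 (?S (blk D v) ((v+n-1) mod n)) (?S (blk D v) v) (?S (blk D v) ((v+1) mod n))"
    by (simp add: f8_def)
  also have "?S (blk D v) v = x v" using S_stable[OF op v, of "blk D v" x] bp by auto
  finally show ?thesis using gen v by simp
qed

lemma outside:
  "\<forall>B\<in>set L. u \<notin> B \<Longrightarrow> fold (block_update n) L x u = x u"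
  by (induction L arbitrary: x) (auto simp: block_update_def)

theorem mainTheorem15:
  fixes n i :: nat and D D' :: "nat set list"
  assumes "n \<ge> 3"
    and "ordered_partition n D" and "ordered_partition n D'"
    and "i < n"
    and "lab D ((i + 1) mod n) i = Minus" and "lab D' ((i + 1) mod n) i = Minus"
    and "lab D ((i + n - 1) mod n) i \<noteq> lab D' ((i + n - 1) mod n) i"
    and "\<forall>j<n. (j, (j + 1) mod n) \<noteq> ((i + n - 1) mod n, i) \<longrightarrow>
                lab D j ((j + 1) mod n) = lab D' j ((j + 1) mod n)"
    and "\<forall>j<n. ((j + 1) mod n, j) \<noteq> ((i + n - 1) mod n, i) \<longrightarrow>
                lab D ((j + 1) mod n) j = lab D' ((j + 1) mod n) j"
  shows "sched_update n D = sched_update n D'"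
proof (rule ext)
  fix x
  note op = assms(2) assms(3)
  have labM: "lab E u v = Minus \<longleftrightarrow> blk E u < blk E v" for E u v
    by (auto simp: lab_def)
  have bkw: "((v + 1) mod n + n - 1) mod n = v" if "v < n" for v
  proof (cases "v + 1 = n")
    case True then show ?thesis using that by simp
  next
    case False then have "(v+1) mod n = v + 1" using that by simp
    then show ?thesis using that by simp
  qed
  have fwd: "((v + n - 1) mod n + 1) mod n = v" if "v < n" for v
  proof (cases "v = 0")
    case True then show ?thesis using assms(1) by (simp add: mod_Suc)
  next
    case False then have "(v + n - 1) mod n = v - 1"
      using that by (metis Nat.add_diff_assoc2 One_nat_def Suc_leI add.commute mod_add_self1 mod_less less_imp_diff_less neq0_conv)
    then show ?thesis using that False by simp
  qed
  have iF: "sched_update n E x i = False" if opE: "ordered_partition n E"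
    and lm: "lab E ((i + 1) mod n) i = Minus" for E
  proof -
    have lt: "blk E ((i+1) mod n) < blk E i" using lm labM by blast
    have i1: "(i+1) mod n < n" using assms(4) by simp
    have "sched_update n E x ((i+1) mod n) \<longrightarrow> \<not> x i"
      using char[OF opE i1, of x] lt bkw[OF assms(4)] by (simp add: r8_def)
    then show ?thesis using char[OF opE assms(4), of x] lt by (auto simp: r8_def)
  qed
  have main: "\<forall>v<n. blk D v = m \<longrightarrow> sched_update n D x v = sched_update n D' x v" for m
  proof (induction m rule: less_induct)
    case (less m)
    show ?case
    proof (intro allI impI)
      fix v assume v: "v < n" and bm: "blk D v = m"
      show "sched_update n D x v = sched_update n D' x v"
      proof (cases "v = i")
        case True
        then show ?thesis using iF[OF op(1) assms(5)] iF[OF op(2) assms(6)] by simp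
      next
        case False
        let ?u1 = "(v + n - 1) mod n" and ?u2 = "(v+1) mod n"
        have u1: "?u1 < n" and u2: "?u2 < n" using v by auto
        have "lab D ?u1 ((?u1 + 1) mod n) = lab D' ?u1 ((?u1 + 1) mod n)"
          using assms(8) u1 fwd[OF v] False by auto
        then have l1: "blk D ?u1 < blk D v \<longleftrightarrow> blk D' ?u1 < blk D' v"
          using labM fwd[OF v] by (metis label.distinct(1) lab_def)
        have "lab D ((v + 1) mod n) v = lab D' ((v + 1) mod n) v"
          using assms(9) v False by auto
        then have l2: "blk D ?u2 < blk D v \<longleftrightarrow> blk D' ?u2 < blk D' v"
          using labM by (metis label.distinct(1) lab_def)
        have e1: "blk D ?u1 < blk D v \<Longrightarrow> sched_update n D x ?u1 = sched_update n D' x ?u1"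
          using less u1 bm by blast
        have e2: "blk D ?u2 < blk D v \<Longrightarrow> sched_update n D x ?u2 = sched_update n D' x ?u2"
          using less u2 bm by blast
        show ?thesis using char[OF op(1) v, of x] char[OF op(2) v, of x] l1 l2 e1 e2
          by (simp split: if_splits)
      qed
    qed
  qed
  show "sched_update n D x = sched_update n D' x"
  proof (rule ext)
    fix v
    show "sched_update n D x v = sched_update n D' x v"
    proof (cases "v < n")
      case True then show ?thesis using main by blast
    next
      case False
      have "\<forall>B\<in>set E. v \<notin> B" if "ordered_partition n E" for E
        using that False unfolding ordered_partition_def by auto
      then show ?thesis using outside op by (simp add: sched_update_def)
    qed
  qed
qed

end
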